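(* For $n\ge0$ let $d_n$ be the number of FQ-legal index sets contained in $\{1,\dots,n\}$ (including the empty set; $d_0=1$); for $n\ge1$ let $c_n$ be the number of FQ-legal index sets contained in $\{1,\dots,n\}$ that contain $n$, with $c_0=1$; and for $n\ge1$ let $b_n$ be the number of FQ-legal index sets contained in $\{1,\dots,n\}$ that contain both $n$ and $n-2$. Then for all $n\ge7$, \[ d_n=c_n+c_{n-1}+\cdots+c_0=c_n+d_{n-1},\qquad c_n=d_{n-5}+c_{n-2}-b_{n-2},\qquad b_n=d_{n-7}, \] and for all $n\ge9$, \[ d_n=d_{n-1}+d_{n-2}-d_{n-3}+d_{n-5}-d_{n-9}. \]
   Context: An FQ-legal index set is a finite set $S$ of positive integers such that no two elements of $S$ differ by $1$, $3$ or $4$, and $S$ does not contain both $1$ and $3$. (These are exactly the index sets $\{\ell_1,\dots,\ell_t\}$ of FQ-legal decompositions $q_{\ell_1}+\cdots+q_{\ell_t}$ with respect to the Fibonacci Quilt sequence $(q_i)$, where an FQ-legal decomposition uses distinct indices with pairwise differences not in $\{1,3,4\}$ and not both indices $1$ and $3$.) First values: $(d_1,\dots,d_{13})=(2,3,4,6,8,11,15,21,30,42,59,82,114)$. *)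

theory Defs
  imports Main
begin

definition FQ_legal :: "nat set \<Rightarrow> bool" where
  "FQ_legal S \<longleftrightarrow> finite S \<and> (\<forall>x\<in>S. 0 < x) \<and>
     (\<forall>x\<in>S. \<forall>y\<in>S. x < y \<longrightarrow> y - x \<notin> {1, 3, 4}) \<and>
     \<not> (1 \<in> S \<and> 3 \<in> S)"

definition fq_d :: "nat \<Rightarrow> nat" where
  "fq_d n = card {S. S \<subseteq> {1..n} \<and> FQ_legal S}"

definition fq_c :: "nat \<Rightarrow> nat" where
  "fq_c n = (if n = 0 then 1 else card {S. S \<subseteq> {1..n} \<and> FQ_legal S \<and> n \<in> S})"

text \<open>Only meaningful for n >= 1; for n <= 2 the element n - 2 is not a positive index,
  and since 0 never belongs to a legal set the count is 0, as in the paper.\<close>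
definition fq_b :: "nat \<Rightarrow> nat" where
  "fq_b n = card {S. S \<subseteq> {1..n} \<and> FQ_legal S \<and> n \<in> S \<and> n - 2 \<in> S}"

end

theory Submission
  imports Defs
begin

definition LL :: "nat \<Rightarrow> nat set set" where "LL n = {S. S \<subseteq> {1..n} \<and> FQ_legal S}"
definition CC :: "nat \<Rightarrow> nat set set" where "CC n = {S\<in>LL n. n \<in> S}"
definition BB :: "nat \<Rightarrow> nat set set" where "BB n = {S\<in>LL n. n \<in> S \<and> n - 2 \<in> S}"

lemma finite_LL: "finite (LL n)"
  by (rule finite_subset[of _ "Pow {1..n}"]) (auto simp: LL_def)

lemma finite_CC: "finite (CC n)" using finite_LL unfolding CC_def by auto
lemma finite_BB: "finite (BB n)" using finite_LL unfolding BB_def by auto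

lemma d_eq: "fq_d n = card (LL n)" unfolding fq_d_def LL_def by simp
lemma c_eq: "n \<ge> 1 \<Longrightarrow> fq_c n = card (CC n)" unfolding fq_c_def CC_def LL_def
  by (simp add: conj_assoc)
lemma b_eq: "fq_b n = card (BB n)" unfolding fq_b_def BB_def LL_def
  by (simp add: conj_assoc)

lemma legal_sub: "FQ_legal S \<Longrightarrow> T \<subseteq> S \<Longrightarrow> FQ_legal T"
  unfolding FQ_legal_def by (meson finite_subset subset_iff)

lemma legal_diff: "FQ_legal S \<Longrightarrow> x \<in> S \<Longrightarrow> y \<in> S \<Longrightarrow> x < y \<Longrightarrow> y - x \<noteq> 1 \<and> y - x \<noteq> 3 \<and> y - x \<noteq> 4"
  unfolding FQ_legal_def by blast

lemma legal_insert:
  assumes "FQ_legal T" "0 < n" "n \<noteq> 1" "n \<noteq> 3"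
    "\<forall>x\<in>T. x < n \<and> n - x \<noteq> 1 \<and> n - x \<noteq> 3 \<and> n - x \<noteq> 4"
  shows "FQ_legal (insert n T)"
proof -
  have p: "\<forall>x\<in>insert n T. \<forall>y\<in>insert n T. x < y \<longrightarrow> y - x \<notin> {1, 3, 4}"
  proof (intro ballI impI)
    fix x y assume x: "x \<in> insert n T" and y: "y \<in> insert n T" and xy: "x < y"
    show "y - x \<notin> {1, 3, 4}"
    proof (cases "y = n")
      case True
      then show ?thesis using assms(5) x xy by auto
    next
      case False
      then have yT: "y \<in> T" using y by auto
      then have "x \<noteq> n" using assms(5) xy by auto
      then have "x \<in> T" using x by auto
      then show ?thesis using yT xy assms(1) unfolding FQ_legal_def by blast
    qed
  qed
  show ?thesis using assms(1-4) p unfolding FQ_legal_def by auto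
qed

lemma legal_empty: "FQ_legal {}" unfolding FQ_legal_def by simp

lemma d_step: assumes "n \<ge> 1" shows "fq_d n = fq_c n + fq_d (n - 1)"
proof -
  have "LL n = CC n \<union> LL (n - 1)"
  proof
    show "LL n \<subseteq> CC n \<union> LL (n - 1)"
    proof
      fix S assume "S \<in> LL n"
      then have S: "S \<subseteq> {1..n}" "FQ_legal S" unfolding LL_def by auto
      show "S \<in> CC n \<union> LL (n - 1)"
      proof (cases "n \<in> S")
        case True then show ?thesis using S unfolding CC_def LL_def by auto
      next
        case False
        have "S \<subseteq> {1..n-1}"
        proof
          fix x assume "x \<in> S"
          then have "x \<in> {1..n}" "x \<noteq> n" using S False by auto
          then show "x \<in> {1..n-1}" by auto
        qed
        then show ?thesis using S unfolding CC_def LL_def by auto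
      qed
    qed
    have "{1..n-1} \<subseteq> {1..n}" by auto
    then show "CC n \<union> LL (n - 1) \<subseteq> LL n" unfolding CC_def LL_def by blast
  qed
  moreover have "CC n \<inter> LL (n - 1) = {}" unfolding LL_def CC_def using assms by auto
  ultimately have "card (LL n) = card (CC n) + card (LL (n-1))"
    using finite_CC finite_LL by (simp add: card_Un_disjoint)
  then show ?thesis using assms by (simp add: d_eq c_eq)
qed

lemma d0: "fq_d 0 = 1"
proof -
  have "{S. S \<subseteq> {1..0::nat} \<and> FQ_legal S} = {{}}" using legal_empty by auto
  then show ?thesis unfolding fq_d_def by simp
qed

lemma d_sum: "fq_d n = (\<Sum>k\<le>n. fq_c k)"
proof (induction n)
  case 0 then show ?case using d0 by (simp add: fq_c_def)
next
  case (Suc n) then show ?case using d_step[of "Suc n"] by simp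
qed

lemma b_formula: assumes "n \<ge> 7" shows "fq_b n = fq_d (n - 7)"
proof -
  let ?f = "\<lambda>T. insert n (insert (n-2) T)"
  have "BB n = ?f ` LL (n - 7)"
  proof
    show "BB n \<subseteq> ?f ` LL (n - 7)"
    proof
      fix S assume S: "S \<in> BB n"
      then have L: "FQ_legal S" "S \<subseteq> {1..n}" "n \<in> S" "n - 2 \<in> S" unfolding BB_def LL_def by auto
      let ?T = "S - {n, n-2}"
      have "?T \<subseteq> {1..n-7}"
      proof
        fix x assume x: "x \<in> ?T"
        then have h: "x \<in> S" "x \<noteq> n" "x \<noteq> n - 2" "x \<le> n" "x \<ge> 1" using L by auto
        then have h2: "x < n" by simp
        have h3: "n - x \<noteq> 1 \<and> n - x \<noteq> 3 \<and> n - x \<noteq> 4"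
          using legal_diff[OF L(1) \<open>x\<in>S\<close> L(3)] h2 by simp
        have h4: "x < n - 2" using h h2 h3 by arith
        have h5: "n - 2 - x \<noteq> 1 \<and> n - 2 - x \<noteq> 3 \<and> n - 2 - x \<noteq> 4"
          using legal_diff[OF L(1) \<open>x\<in>S\<close> L(4)] h4 by simp
        show "x \<in> {1..n-7}" using h h2 h3 h4 h5 assms by auto
      qed
      moreover have "FQ_legal ?T" using legal_sub[OF L(1)] by auto
      moreover have "S = ?f ?T" using L by auto
      ultimately show "S \<in> ?f ` LL (n - 7)" unfolding LL_def by blast
    qed
  next
    show "?f ` LL (n - 7) \<subseteq> BB n"
    proof
      fix S assume "S \<in> ?f ` LL (n - 7)"
      then obtain T where T: "T \<subseteq> {1..n-7}" "FQ_legal T" and S: "S = ?f T" unfolding LL_def by auto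
      have Tb: "\<forall>x\<in>T. 1 \<le> x \<and> x \<le> n-7" using T by auto
      have "FQ_legal (insert (n-2) T)"
        by (rule legal_insert) (use Tb T assms in auto)
      then have "FQ_legal S" unfolding S
        by (rule legal_insert) (use Tb T assms in auto)
      moreover have "S \<subseteq> {1..n}" using S Tb assms by auto
      ultimately show "S \<in> BB n" unfolding BB_def LL_def using S by auto
    qed
  qed
  moreover have "inj_on ?f (LL (n - 7))"
  proof (rule inj_onI)
    fix A B assume A: "A \<in> LL (n-7)" and B: "B \<in> LL (n-7)" and e: "?f A = ?f B"
    have s: "A \<subseteq> {1..n-7}" "B \<subseteq> {1..n-7}" using A B unfolding LL_def by auto
    have "n \<notin> {1..n-7}" "n - 2 \<notin> {1..n-7}" using assms by auto
    then have "n \<notin> A" "n - 2 \<notin> A" "n \<notin> B" "n - 2 \<notin> B" using s by blast+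
    then show "A = B" using e by (metis insert_absorb insert_commute insert_ident insert_iff)
  qed
  ultimately show ?thesis by (simp add: b_eq d_eq card_image)
qed

lemma c_formula: assumes "n \<ge> 7"
  shows "fq_c n = fq_d (n - 5) + (fq_c (n - 2) - fq_b (n - 2))" and "fq_b (n-2) \<le> fq_c (n-2)"
proof -
  define D where "D = CC (n-2) - BB (n-2)"
  have BC: "BB (n-2) \<subseteq> CC (n-2)" unfolding BB_def CC_def by auto
  have cD: "card D = fq_c (n-2) - fq_b (n-2)"
    unfolding D_def using BC finite_BB assms by (simp add: card_Diff_subset c_eq b_eq)
  have D: "D = {T \<in> LL (n-2). n - 2 \<in> T \<and> n - 4 \<notin> T}"
  proof -
    have "n - 2 - 2 = n - 4" by simp
    then show ?thesis unfolding D_def CC_def BB_def by auto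
  qed
  have eq: "CC n = insert n ` LL (n-5) \<union> insert n ` D"
  proof
    show "CC n \<subseteq> insert n ` LL (n-5) \<union> insert n ` D"
    proof
      fix S assume S: "S \<in> CC n"
      then have L: "FQ_legal S" "S \<subseteq> {1..n}" "n \<in> S" unfolding CC_def LL_def by auto
      let ?T = "S - {n}"
      have leg: "FQ_legal ?T" using legal_sub[OF L(1)] by auto
      have key: "x \<le> n - 5 \<or> x = n - 2" "x \<ge> 1" if "x \<in> ?T" for x
      proof -
        have "x \<in> S" "x \<noteq> n" "x \<le> n" "x \<ge> 1" using L that by auto
        moreover have "n - x \<noteq> 1 \<and> n - x \<noteq> 3 \<and> n - x \<noteq> 4"
          using legal_diff[OF L(1) \<open>x\<in>S\<close> L(3)] calculation by simp
        ultimately show "x \<le> n - 5 \<or> x = n - 2" "x \<ge> 1" using assms by auto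
      qed
      have Seq: "S = insert n ?T" using L by auto
      show "S \<in> insert n ` LL (n-5) \<union> insert n ` D"
      proof (cases "n - 2 \<in> ?T")
        case True
        have "n - 4 \<notin> ?T"
        proof
          assume "n - 4 \<in> ?T"
          from key[OF this] assms show False by arith
        qed
        moreover have "?T \<subseteq> {1..n-2}"
        proof
          fix x assume "x \<in> ?T"
          from key[OF this] assms show "x \<in> {1..n-2}" by auto
        qed
        ultimately have "?T \<in> D" unfolding D LL_def using leg True by auto
        then show ?thesis using Seq by blast
      next
        case False
        have "?T \<subseteq> {1..n-5}"
        proof
          fix x assume x: "x \<in> ?T"
          then have "x \<noteq> n - 2" using False by auto
          with key[OF x] show "x \<in> {1..n-5}" by auto
        qed
        then have "?T \<in> LL (n-5)" unfolding LL_def using leg by auto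
        then show ?thesis using Seq by blast
      qed
    qed
  next
    show "insert n ` LL (n-5) \<union> insert n ` D \<subseteq> CC n"
    proof
      fix S assume "S \<in> insert n ` LL (n-5) \<union> insert n ` D"
      then obtain T where T: "FQ_legal T" "\<forall>x\<in>T. 1 \<le> x \<and> (x \<le> n - 5 \<or> x = n - 2)"
        and S: "S = insert n T"
      proof (elim UnE imageE)
        fix T assume "T \<in> LL (n-5)" "S = insert n T"
        moreover then have "\<forall>x\<in>T. 1 \<le> x \<and> (x \<le> n - 5 \<or> x = n - 2)" unfolding LL_def by auto
        ultimately show thesis using that unfolding LL_def by auto
      next
        fix T assume TD: "T \<in> D" "S = insert n T"
        then have T1: "FQ_legal T" "T \<subseteq> {1..n-2}" "n - 2 \<in> T" "n - 4 \<notin> T" unfolding D LL_def by auto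
        have "\<forall>x\<in>T. 1 \<le> x \<and> (x \<le> n - 5 \<or> x = n - 2)"
        proof
          fix x assume x: "x \<in> T"
          then have "1 \<le> x" "x \<le> n - 2" "x \<noteq> n - 4" using T1 by auto
          moreover have "x < n - 2 \<Longrightarrow> n - 2 - x \<noteq> 1" using legal_diff[OF T1(1) x T1(3)] by simp
          ultimately show "1 \<le> x \<and> (x \<le> n - 5 \<or> x = n - 2)" using assms by arith
        qed
        then show thesis using that T1 TD by auto
      qed
      have "\<forall>x\<in>T. x < n \<and> n - x \<noteq> 1 \<and> n - x \<noteq> 3 \<and> n - x \<noteq> 4"
        using T(2) assms by auto
      then have "FQ_legal S" unfolding S using T assms by (intro legal_insert) auto
      moreover have "S \<subseteq> {1..n}" using S T(2) assms by auto
      ultimately show "S \<in> CC n" unfolding CC_def LL_def using S by auto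
    qed
  qed
  have dis: "insert n ` LL (n-5) \<inter> insert n ` D = {}"
  proof -
    have "n - 2 \<notin> insert n A" if "A \<in> LL (n-5)" for A
    proof -
      have "A \<subseteq> {1..n-5}" using that unfolding LL_def by auto
      moreover have "n - 2 \<notin> {1..n-5}" "n - 2 \<noteq> n" using assms by auto
      ultimately show ?thesis by blast
    qed
    moreover have "n - 2 \<in> insert n A" if "A \<in> D" for A using that unfolding D by auto
    ultimately show ?thesis by blast
  qed
  have inj: "inj_on (insert n) A" if "\<forall>T\<in>A. n \<notin> T" for A
    using that by (intro inj_onI) (metis insert_absorb insert_ident)
  have i1: "inj_on (insert n) (LL (n-5))" by (rule inj) (use assms in \<open>auto simp: LL_def\<close>)
  have i2: "inj_on (insert n) D" by (rule inj) (use assms in \<open>auto simp: D LL_def\<close>)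
  have fD: "finite D" unfolding D_def using finite_CC by auto
  have "card (CC n) = card (LL (n-5)) + card D"
    unfolding eq using dis i1 i2 fD finite_LL
    by (simp add: card_Un_disjoint card_image)
  then show "fq_c n = fq_d (n - 5) + (fq_c (n - 2) - fq_b (n - 2))"
    using assms cD by (simp add: c_eq d_eq)
  show "fq_b (n-2) \<le> fq_c (n-2)" using BC finite_CC assms by (simp add: card_mono c_eq b_eq)
qed

theorem mainTheorem10:
  shows "(\<forall>n::nat. n \<ge> 7 \<longrightarrow>
            fq_d n = (\<Sum>k\<le>n. fq_c k) \<and>
            fq_d n = fq_c n + fq_d (n - 1) \<and>
            int (fq_c n) = int (fq_d (n - 5)) + int (fq_c (n - 2)) - int (fq_b (n - 2)) \<and>
            fq_b n = fq_d (n - 7))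
       \<and> (\<forall>n::nat. n \<ge> 9 \<longrightarrow>
            int (fq_d n) = int (fq_d (n - 1)) + int (fq_d (n - 2)) - int (fq_d (n - 3))
                           + int (fq_d (n - 5)) - int (fq_d (n - 9)))"
proof (intro conjI allI impI)
  fix n :: nat assume n: "n \<ge> 7"
  show "fq_d n = (\<Sum>k\<le>n. fq_c k)" by (rule d_sum)
  show "fq_d n = fq_c n + fq_d (n - 1)" using n by (simp add: d_step)
  show "int (fq_c n) = int (fq_d (n - 5)) + int (fq_c (n - 2)) - int (fq_b (n - 2))"
    using c_formula[OF n] by simp
  show "fq_b n = fq_d (n - 7)" using n by (rule b_formula)
next
  fix n :: nat assume n: "n \<ge> 9"
  have a: "fq_d n = fq_c n + fq_d (n - 1)" using n by (simp add: d_step)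
  have b: "fq_d (n-2) = fq_c (n-2) + fq_d (n - 3)" using n d_step[of "n-2"] by (simp add: numeral_eq_Suc)
  have c: "fq_c n = fq_d (n - 5) + (fq_c (n - 2) - fq_b (n - 2))" "fq_b (n-2) \<le> fq_c (n-2)"
    using c_formula[of n] n by auto
  have e: "fq_b (n-2) = fq_d (n - 9)" using b_formula[of "n-2"] n by (simp add: numeral_eq_Suc)
  show "int (fq_d n) = int (fq_d (n - 1)) + int (fq_d (n - 2)) - int (fq_d (n - 3))
                           + int (fq_d (n - 5)) - int (fq_d (n - 9))"
    using a b c e by simp
qed

end
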